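(* Let $(a_n(q))_{n\ge1}$ be a sequence in $\mathbb{Z}[q]$ and $N\ge1$. Suppose that $\prod_{d\mid N,\,\mu(d)=1}a_{N/d}(q^d)\equiv\prod_{d\mid N,\,\mu(d)=-1}a_{N/d}(q^d)\pmod{[N]_q}$ and that $\sum_{d\mid n}\mu(d)a_{n/d}(q^d)\equiv0\pmod{[n]_q}$ for all $1\le n<N$. Then $[N]_q$ divides $\left(\sum_{d\mid N}\mu(d)\,a_{N/d}(q^d)\right)\cdot\prod_{d\mid N,\ d>1,\ \mu(d)=1}a_{N/d}(q^d)$ in $\mathbb{Z}[q]$.
   Context: $\mu$ is the Möbius function and $[n]_q=1+q+\dots+q^{n-1}$; polynomial congruences modulo $[n]_q$ mean divisibility of the difference by $[n]_q$ in $\mathbb{Z}[q]$. *)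

theory Defs
  imports "HOL-Computational_Algebra.Computational_Algebra"
begin

definition moebius :: "nat \<Rightarrow> int" where
  "moebius n = (if n = 0 \<or> \<not> squarefree n then 0 else (-1) ^ card (prime_factors n))"

definition qint :: "nat \<Rightarrow> int poly" where
  "qint n = (\<Sum>i<n. monom 1 i)"

definition qsub :: "int poly \<Rightarrow> nat \<Rightarrow> int poly" where
  "qsub p d = pcompose p (monom 1 d)"

end

theory Submission
  imports Defs
begin


lemma moebius_mult_prime:
  assumes p: "prime p" and nd: "\<not> p dvd d" and d: "d > 0"
  shows "moebius (d * p) = - moebius d"
proof -
  have cop: "coprime d p" using p nd
    using prime_imp_coprime coprime_commute by blast
  have sq: "squarefree (d * p) \<longleftrightarrow> squarefree d"
    using squarefree_mult_coprime[OF cop _ squarefree_prime[OF p]] squarefree_multD(1)[of d p] by blast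
  have pf: "prime_factors (d * p) = insert p (prime_factors d)"
    using d p by (simp add: prime_factors_product prime_prime_factors)
  have pn: "p \<notin> prime_factors d" using nd by auto
  have "card (prime_factors (d * p)) = Suc (card (prime_factors d))"
    using pf pn by simp
  moreover have "d * p \<noteq> 0" using d p by (simp add: prime_gt_0_nat)
  ultimately show ?thesis using d sq unfolding moebius_def by simp
qed

lemma moebius_nz: "moebius d \<noteq> 0 \<Longrightarrow> d > 0 \<and> squarefree d"
  unfolding moebius_def by (auto split: if_splits)

lemma moebius_vals: "moebius d = 0 \<or> moebius d = 1 \<or> moebius d = -1"
  unfolding moebius_def by (auto simp: minus_one_power_iff)

lemma moebius_one [simp]: "moebius 1 = 1"
  unfolding moebius_def by simp

lemma moebius_Suc0 [simp]: "moebius (Suc 0) = 1"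
  using moebius_one by simp

definition sig :: "nat \<Rightarrow> nat \<Rightarrow> nat" where
  "sig p d = (if p dvd d then d div p else d * p)"

lemma sig_props:
  fixes G :: "nat \<Rightarrow> 'b"
  assumes p: "prime p" and pn: "p dvd n" and n: "n > 0"
    and G: "\<And>d. d dvd n \<Longrightarrow> \<not> p dvd d \<Longrightarrow> G (d * p) = G d"
    and dn: "d dvd n" and md: "moebius d \<noteq> 0"
  shows "sig p d dvd n" "moebius (sig p d) = - moebius d" "sig p (sig p d) = d"
    "G (sig p d) = G d"
proof -
  from moebius_nz[OF md] have d0: "d > 0" and sqd: "squarefree d" by auto
  have p1: "p > 1" using p by (rule prime_gt_1_nat)
  have "sig p d dvd n \<and> moebius (sig p d) = - moebius d \<and> sig p (sig p d) = d \<and> G (sig p d) = G d"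
  proof (cases "p dvd d")
    case False
    have cop: "coprime d p" using p False
      using prime_imp_coprime coprime_commute by blast
    have "d * p dvd n" using divides_mult[OF dn pn cop] .
    moreover have "moebius (d * p) = - moebius d" using moebius_mult_prime[OF p False d0] .
    moreover have "sig p (d * p) = d" using p1 by (simp add: sig_def)
    moreover have "G (d * p) = G d" using G[OF dn False] .
    ultimately show ?thesis using False by (simp add: sig_def)
  next
    case True
    define d' where "d' = d div p"
    have dd: "d = d' * p" using True unfolding d'_def by simp
    have nd': "\<not> p dvd d'"
    proof
      assume "p dvd d'"
      then have "p * p dvd d' * p" by (rule mult_dvd_mono[OF _ dvd_refl])
      then have "p * p dvd d" using dd by metis
      then have "p ^ 2 dvd d" by (simp add: power2_eq_square)
      then have "p dvd 1" using sqd unfolding squarefree_def by blast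
      then show False using p by simp
    qed
    have d'0: "d' > 0" using d0 dd by (metis mult_0 neq0_conv)
    have sd: "sig p d = d'" unfolding sig_def d'_def using True by simp
    have "d' dvd n" using dn dd dvd_mult_left by blast
    moreover have "moebius d = - moebius d'" using moebius_mult_prime[OF p nd' d'0] unfolding dd[symmetric] by simp
    moreover have "sig p d' = d" unfolding sig_def using nd' dd by simp
    moreover have "G d = G d'" using G[OF \<open>d' dvd n\<close> nd'] unfolding dd[symmetric] .
    ultimately show ?thesis using sd by simp
  qed
  then show "sig p d dvd n" "moebius (sig p d) = - moebius d" "sig p (sig p d) = d"
    "G (sig p d) = G d" by auto
qed

lemma invol:
  fixes G :: "nat \<Rightarrow> 'b::comm_ring_1"
  assumes p: "prime p" and pn: "p dvd n" and n: "n > 0"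
    and G: "\<And>d. d dvd n \<Longrightarrow> \<not> p dvd d \<Longrightarrow> G (d * p) = G d"
  shows "prod G {d. d dvd n \<and> moebius d = 1} = prod G {d. d dvd n \<and> moebius d = -1}"
    and "(\<Sum>d\<in>{d. d dvd n}. of_int (moebius d) * G d) = 0"
proof -
  note S = sig_props[where G=G, OF p pn n G]
  let ?U = "{d. d dvd n \<and> moebius d = 1}"
  let ?V = "{d. d dvd n \<and> moebius d = -1}"
  have bij: "bij_betw (sig p) ?U ?V"
  proof (rule bij_betw_byWitness[where f' = "sig p"])
    show "\<forall>a\<in>?U. sig p (sig p a) = a" using S(3) by force
    show "\<forall>a\<in>?V. sig p (sig p a) = a" using S(3) by force
    show "sig p ` ?U \<subseteq> ?V" using S(1,2) by force
    show "sig p ` ?V \<subseteq> ?U" using S(1,2) by force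
  qed
  have finU: "finite ?U" using n by simp
  have finV: "finite ?V" using n by simp
  have GU: "\<And>d. d \<in> ?U \<Longrightarrow> G (sig p d) = G d" using S(4) by force
  have e1: "prod G ?V = prod G ?U"
    using prod.reindex_bij_betw[OF bij, of G] GU by (metis (no_types, lifting) prod.cong)
  have e2: "sum G ?V = sum G ?U"
    using sum.reindex_bij_betw[OF bij, of G] GU by (metis (no_types, lifting) sum.cong)
  show "prod G ?U = prod G ?V" by (rule e1[symmetric])
  have fin: "finite {d. d dvd n}" using n by simp
  have "(\<Sum>d\<in>{d. d dvd n}. of_int (moebius d) * G d) = (\<Sum>d\<in>?U \<union> ?V. of_int (moebius d) * G d)"
  proof (rule sum.mono_neutral_right[OF fin])
    show "?U \<union> ?V \<subseteq> {d. d dvd n}" by blast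
    show "\<forall>i\<in>{d. d dvd n} - (?U \<union> ?V). of_int (moebius i) * G i = 0"
      using moebius_vals by force
  qed
  also have "\<dots> = (\<Sum>d\<in>?U. of_int (moebius d) * G d) + (\<Sum>d\<in>?V. of_int (moebius d) * G d)"
    using finU finV by (intro sum.union_disjoint) auto
  also have "\<dots> = sum G ?U - sum G ?V"
    by (simp add: sum_negf)
  finally show "(\<Sum>d\<in>{d. d dvd n}. of_int (moebius d) * G d) = 0" using e2 by simp
qed



abbreviation mpi :: "int poly \<Rightarrow> complex poly" where "mpi \<equiv> map_poly of_int"

lemma mpi_add: "mpi (p + q) = mpi p + mpi q"
  by (rule poly_eqI) (simp add: coeff_map_poly)
lemma mpi_diff: "mpi (p - q) = mpi p - mpi q"
  by (rule poly_eqI) (simp add: coeff_map_poly)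
lemma mpi_mult: "mpi (p * q) = mpi p * mpi q"
  by (rule poly_eqI) (simp add: coeff_map_poly coeff_mult)
lemma mpi_const: "mpi [:c:] = [:of_int c:]"
  by (rule poly_eqI) (simp add: coeff_map_poly coeff_pCons split: nat.splits)
lemma mpi_of_int: "mpi (of_int c) = of_int c"
  by (simp add: of_int_poly mpi_const)
lemma mpi_sum: "mpi (sum f A) = (\<Sum>x\<in>A. mpi (f x))"
  by (induct A rule: infinite_finite_induct) (auto simp: mpi_add)
lemma mpi_prod: "mpi (prod f A) = (\<Prod>x\<in>A. mpi (f x))"
  by (induct A rule: infinite_finite_induct) (auto simp: mpi_mult)
lemma mpi_pcompose: "mpi (pcompose p q) = pcompose (mpi p) (mpi q)"
  by (induct p) (simp_all add: pcompose_pCons mpi_add mpi_mult mpi_const map_poly_pCons)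

definition ev :: "int poly \<Rightarrow> complex \<Rightarrow> complex" where
  "ev f z = poly (mpi f) z"

lemma ev_add: "ev (p + q) z = ev p z + ev q z" by (simp add: ev_def mpi_add)
lemma ev_diff: "ev (p - q) z = ev p z - ev q z" by (simp add: ev_def mpi_diff)
lemma ev_mult: "ev (p * q) z = ev p z * ev q z" by (simp add: ev_def mpi_mult)
lemma ev_of_int: "ev (of_int c) z = of_int c" by (simp add: ev_def mpi_of_int)
lemma ev_sum: "ev (sum f A) z = (\<Sum>x\<in>A. ev (f x) z)" by (simp add: ev_def mpi_sum poly_sum)
lemma ev_prod: "ev (prod f A) z = (\<Prod>x\<in>A. ev (f x) z)" by (simp add: ev_def mpi_prod poly_prod)
lemma ev_qsub: "ev (qsub f d) z = ev f (z ^ d)"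
  by (simp add: ev_def qsub_def mpi_pcompose poly_pcompose map_poly_monom poly_monom)

lemma ev_qint: "ev (qint n) z = (\<Sum>i<n. z ^ i)"
  by (simp add: qint_def ev_sum) (simp add: ev_def map_poly_monom poly_monom)

lemma E1:
  assumes "qint n dvd f" "z ^ n = 1" "z \<noteq> 1"
  shows "ev f z = 0"
proof -
  from assms(1) obtain h where h: "f = qint n * h" by (auto elim: dvdE)
  have "ev (qint n) z = 0" using assms(2,3) by (simp add: ev_qint sum_gp_strict)
  then show ?thesis by (simp add: h ev_mult)
qed

lemma coeff_qint: "coeff (qint n) i = (if i < n then 1 else 0)"
  by (simp add: qint_def coeff_sum)

lemma degree_qint: "n \<ge> 1 \<Longrightarrow> degree (qint n) = n - 1"
proof (rule antisym)
  assume "n \<ge> 1"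
  show "degree (qint n) \<le> n - 1"
    by (rule degree_le) (auto simp: coeff_qint)
  show "n - 1 \<le> degree (qint n)"
    by (rule le_degree) (use \<open>n \<ge> 1\<close> in \<open>simp add: coeff_qint\<close>)
qed

lemma qint_nz: "n \<ge> 1 \<Longrightarrow> qint n \<noteq> 0"
  by (metis coeff_qint coeff_0 less_le_trans zero_less_one one_neq_zero)

lemma E2:
  assumes n: "n \<ge> 1" and H: "\<And>z. z ^ n = 1 \<Longrightarrow> z \<noteq> 1 \<Longrightarrow> ev f z = 0"
  shows "qint n dvd f"
proof -
  let ?g = "qint n"
  have g0: "?g \<noteq> 0" using qint_nz[OF n] .
  have lc: "coeff ?g (degree ?g) = 1" using n by (simp add: degree_qint coeff_qint)
  obtain q r where qr: "pseudo_divmod f ?g = (q, r)" by (cases "pseudo_divmod f ?g") auto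
  from pseudo_divmod[OF g0 qr] lc have fe: "f = ?g * q + r" and dr: "r = 0 \<or> degree r < degree ?g"
    by auto
  have rz: "ev r z = 0" if "z ^ n = 1" "z \<noteq> 1" for z
  proof -
    have "ev f z = ev ?g z * ev q z + ev r z" using fe by (metis ev_add ev_mult)
    moreover have "ev ?g z = 0" using E1[of n ?g z] that by simp
    ultimately show ?thesis using H[OF that] by simp
  qed
  have "r = 0"
  proof (rule ccontr)
    assume r0: "r \<noteq> 0"
    have mr0: "mpi r \<noteq> 0" using r0 by (subst map_poly_eq_0_iff) auto
    have "{z. z ^ n = 1} - {1} \<subseteq> {x. poly (mpi r) x = 0}"
      using rz by (auto simp: ev_def)
    then have "card ({z::complex. z ^ n = 1} - {1}) \<le> card {x. poly (mpi r) x = 0}"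
      by (intro card_mono poly_roots_finite mr0)
    also have "\<dots> \<le> degree (mpi r)" by (rule card_poly_roots_bound[OF mr0])
    also have "\<dots> = degree r" by (simp add: degree_map_poly)
    finally have "n - 1 \<le> degree r"
      using n card_roots_unity_eq[of n] by (simp add: card_Diff_singleton)
    then show False using dr r0 degree_qint[OF n] by simp
  qed
  then show ?thesis using fe by simp
qed



definition prim :: "nat \<Rightarrow> complex \<Rightarrow> bool" where
  "prim e z \<longleftrightarrow> 0 < e \<and> (\<forall>k. z ^ k = 1 \<longleftrightarrow> e dvd k)"

lemma prim_exists:
  assumes "z ^ n = 1" "n > 0"
  shows "\<exists>e. prim e z \<and> e dvd n"
proof -
  define e where "e = (LEAST k. 0 < k \<and> z ^ k = 1)"
  have ex: "0 < n \<and> z ^ n = 1" using assms by simp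
  have e: "0 < e \<and> z ^ e = 1" unfolding e_def by (rule LeastI[of "\<lambda>k. 0 < k \<and> z ^ k = 1" n, OF ex])
  have iff: "z ^ k = 1 \<longleftrightarrow> e dvd k" for k
  proof
    assume zk: "z ^ k = 1"
    have kk: "k = e * (k div e) + k mod e" by simp
    have "z ^ k = (z ^ e) ^ (k div e) * z ^ (k mod e)"
      by (subst kk) (simp only: power_add power_mult)
    then have km: "z ^ (k mod e) = 1" using zk e by simp
    show "e dvd k"
    proof (rule ccontr)
      assume "\<not> e dvd k"
      then have "0 < k mod e" by (simp add: dvd_eq_mod_eq_0)
      then have P: "0 < k mod e \<and> z ^ (k mod e) = 1" using km by simp
      from Least_le[of "\<lambda>k. 0 < k \<and> z ^ k = 1" "k mod e", OF P]
      have "e \<le> k mod e" by (simp only: e_def[symmetric])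
      moreover have "k mod e < e" using e by simp
      ultimately show False by simp
    qed
  next
    assume "e dvd k"
    then obtain j where "k = e * j" by (rule dvdE)
    then show "z ^ k = 1" using e by (simp add: power_mult)
  qed
  have "prim e z" using e iff by (simp add: prim_def)
  moreover have "e dvd n" using iff[of n] assms(1) by simp
  ultimately show ?thesis by blast
qed

lemma dvd_mult_gcd_iff:
  fixes d e k :: nat
  assumes "e > 0"
  shows "e dvd d * k \<longleftrightarrow> e div gcd d e dvd k"
proof -
  have g0: "gcd d e \<noteq> 0" using assms by simp
  obtain d' e' where de: "d = d' * gcd d e" "e = e' * gcd d e" "coprime d' e'"
    using gcd_coprime_exists[OF g0] by blast
  have ed: "e div gcd d e = e'" using de(2) g0 by (metis nonzero_mult_div_cancel_right)
  have "e dvd d * k \<longleftrightarrow> e' * gcd d e dvd (d' * k) * gcd d e"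
    using de by (metis mult.assoc mult.commute)
  also have "\<dots> \<longleftrightarrow> e' dvd d' * k" using g0 by simp
  also have "\<dots> \<longleftrightarrow> e' dvd k" using de(3) by (simp add: coprime_commute coprime_dvd_mult_right_iff)
  finally show ?thesis using ed by simp
qed

lemma prim_pow:
  assumes "prim e z"
  shows "prim (e div gcd d e) (z ^ d)"
proof -
  have e0: "e > 0" using assms by (simp add: prim_def)
  have "0 < e div gcd d e" using e0
    by (metis dvd_div_eq_0_iff gcd_dvd2 gcd_eq_0_iff neq0_conv)
  moreover have "(z ^ d) ^ k = 1 \<longleftrightarrow> e div gcd d e dvd k" for k
    using assms dvd_mult_gcd_iff[OF e0, of d k] by (simp add: prim_def power_mult[symmetric])
  ultimately show ?thesis by (simp add: prim_def)
qed

lemma lcm_facts: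
  fixes d e n :: nat
  assumes "d dvd n" "e dvd n" "n > 0"
  shows "e div gcd d e dvd n div d" "n div d div (e div gcd d e) = n div lcm d e"
proof -
  have l: "lcm d e = d * (e div gcd d e)"
    by (simp add: lcm_nat_def div_mult_swap)
  have "lcm d e dvd n" using assms by simp
  then obtain t where t: "n = lcm d e * t" by blast
  have d0: "d > 0" using assms by (metis dvd_0_left_iff neq0_conv not_less0)
  have "n div d = (e div gcd d e) * t" using t l d0 by simp
  then show "e div gcd d e dvd n div d" by simp
  show "n div d div (e div gcd d e) = n div lcm d e"
    using l by (simp add: div_mult2_eq)
qed

lemma lcm_inv:
  fixes d e p :: nat
  assumes "prime p" "p dvd e" "\<not> p dvd d"
  shows "lcm (d * p) e = lcm d e"
proof -
  have "coprime d p" using assms prime_imp_coprime coprime_commute by blast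
  then have "lcm d p = d * p" by (simp add: lcm_coprime)
  then have "lcm (d * p) e = lcm d (lcm p e)" by (metis lcm.assoc)
  also have "lcm p e = e" using assms(2) by (simp add: lcm_proj2_iff_nat)
  finally show ?thesis .
qed

lemma split_sum:
  fixes f f' :: "nat \<Rightarrow> complex"
  assumes n: "n > 0" and eq: "\<And>d. d dvd n \<Longrightarrow> d > 1 \<Longrightarrow> f d = f' d"
  shows "(\<Sum>d\<in>{d. d dvd n}. of_int (moebius d) * f d)
       = (f 1 - f' 1) + (\<Sum>d\<in>{d. d dvd n}. of_int (moebius d) * f' d)"
proof -
  have fin: "finite ({d. d dvd n} - {1})" using n by simp
  have S: "{d. d dvd n} = insert 1 ({d. d dvd n} - {1})" by auto
  have R: "(\<Sum>d\<in>{d. d dvd n} - {1}. of_int (moebius d) * f d)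
         = (\<Sum>d\<in>{d. d dvd n} - {1}. of_int (moebius d) * f' d)"
  proof (rule sum.cong[OF refl])
    fix d assume "d \<in> {d. d dvd n} - {1}"
    then have "d dvd n" "d \<noteq> 1" by auto
    moreover then have "d \<noteq> 0" using n by auto
    ultimately show "of_int (moebius d) * f d = of_int (moebius d) * f' d" using eq by simp
  qed
  show ?thesis
    apply (subst (1 2) S)
    apply (subst sum.insert[OF fin], simp)+
    using R moebius_one by (simp add: algebra_simps)
qed



lemma lemmaA:
  fixes a :: "nat \<Rightarrow> int poly" and N :: nat
  assumes hyp: "\<And>n. 1 \<le> n \<Longrightarrow> n < N \<Longrightarrow>
          qint n dvd (\<Sum>d\<in>{d. d dvd n}. of_int (moebius d) * qsub (a (n div d)) d)"
  shows "1 \<le> n \<Longrightarrow> n < N \<Longrightarrow> prim e z \<Longrightarrow> e dvd n \<Longrightarrow> ev (a n) z = ev (a (n div e)) 1"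
proof (induction n arbitrary: e z rule: less_induct)
  case (less n)
  have n0: "n > 0" using less.prems by simp
  have e0: "e > 0" using less.prems(3) by (simp add: prim_def)
  show ?case
  proof (cases "e = 1")
    case True
    then have "z = 1" using less.prems(3) unfolding prim_def by (metis dvd_refl power_one_right)
    then show ?thesis using True by simp
  next
    case False
    have z1: "z \<noteq> 1" using less.prems(3) False unfolding prim_def
      by (metis nat_dvd_1_iff_1 power_one_right)
    have zn: "z ^ n = 1" using less.prems(3,4) unfolding prim_def by blast
    obtain p where p: "prime p" "p dvd e" using prime_factor_nat[OF False] by blast
    have pn: "p dvd n" using p(2) less.prems(4) by (rule dvd_trans)
    define G where "G d = ev (a (n div lcm d e)) 1" for d
    define f where "f d = ev (a (n div d)) (z ^ d)" for d
    have fG: "f d = G d" if "d dvd n" "d > 1" for d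
    proof -
      have "n div d < n" using that n0 by (simp add: div_less_dividend)
      moreover have "1 \<le> n div d" using that n0
        by (metis dvd_div_eq_0_iff less_one not_less dvd_imp_le neq0_conv div_greater_zero_iff)
      moreover have "n div d < N" using calculation less.prems(2) by simp
      ultimately have "ev (a (n div d)) (z ^ d) = ev (a (n div d div (e div gcd d e))) 1"
        using less.IH[of "n div d" "e div gcd d e" "z ^ d"] prim_pow[OF less.prems(3)]
          lcm_facts(1)[OF that(1) less.prems(4) n0] by simp
      then show ?thesis unfolding f_def G_def using lcm_facts(2)[OF that(1) less.prems(4) n0] by simp
    qed
    have sum0: "(\<Sum>d\<in>{d. d dvd n}. of_int (moebius d) * f d) = 0"
      using E1[OF hyp[OF less.prems(1,2)] zn z1]
      by (simp add: ev_sum ev_mult ev_of_int ev_qsub f_def)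
    have Ginv: "G (d * p) = G d" if "d dvd n" "\<not> p dvd d" for d
      unfolding G_def using lcm_inv[OF p that(2)] by simp
    have Gsum: "(\<Sum>d\<in>{d. d dvd n}. of_int (moebius d) * G d) = 0"
      using invol(2)[OF p(1) pn n0, of G] Ginv by blast
    have "f 1 - G 1 = 0" using split_sum[OF n0 fG] sum0 Gsum by simp
    then show ?thesis unfolding f_def G_def by simp
  qed
qed



theorem lemma3:
  fixes a :: "nat \<Rightarrow> int poly" and N :: nat
  assumes "N \<ge> 1"
    and "qint N dvd
          (\<Prod>d\<in>{d. d dvd N \<and> moebius d = 1}. qsub (a (N div d)) d)
        - (\<Prod>d\<in>{d. d dvd N \<and> moebius d = -1}. qsub (a (N div d)) d)"
    and "\<And>n. 1 \<le> n \<Longrightarrow> n < N \<Longrightarrow>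
          qint n dvd (\<Sum>d\<in>{d. d dvd n}. of_int (moebius d) * qsub (a (n div d)) d)"
  shows "qint N dvd
          (\<Sum>d\<in>{d. d dvd N}. of_int (moebius d) * qsub (a (N div d)) d)
        * (\<Prod>d\<in>{d. d dvd N \<and> d > 1 \<and> moebius d = 1}. qsub (a (N div d)) d)"
proof (rule E2[OF assms(1)])
  fix z :: complex
  assume zN: "z ^ N = 1" and z1: "z \<noteq> 1"
  have N0: "N > 0" using assms(1) by simp
  obtain e where e: "prim e z" "e dvd N" using prim_exists[OF zN N0] by blast
  have e1: "e \<noteq> 1" using e(1) z1 unfolding prim_def by (metis dvd_refl power_one_right)
  obtain p where p: "prime p" "p dvd e" using prime_factor_nat[OF e1] by blast
  have pN: "p dvd N" using p(2) e(2) by (rule dvd_trans)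
  define G where "G d = ev (a (N div lcm d e)) 1" for d
  define b where "b d = ev (a (N div d)) (z ^ d)" for d
  have bG: "b d = G d" if "d dvd N" "d > 1" for d
  proof -
    have "N div d < N" using that N0 by (simp add: div_less_dividend)
    moreover have "1 \<le> N div d" using that N0
      by (metis dvd_div_eq_0_iff less_one not_less dvd_imp_le neq0_conv div_greater_zero_iff)
    ultimately have "ev (a (N div d)) (z ^ d) = ev (a (N div d div (e div gcd d e))) 1"
      using lemmaA[OF assms(3), where n="N div d" and e="e div gcd d e" and z="z ^ d"] prim_pow[OF e(1)]
        lcm_facts(1)[OF that(1) e(2) N0] by simp
    then show ?thesis unfolding b_def G_def using lcm_facts(2)[OF that(1) e(2) N0] by simp
  qed
  have Ginv: "G (d * p) = G d" if "d dvd N" "\<not> p dvd d" for d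
    unfolding G_def using lcm_inv[OF p that(2)] by simp
  have Gsum: "(\<Sum>d\<in>{d. d dvd N}. of_int (moebius d) * G d) = 0"
    using invol(2)[OF p(1) pN N0, of G] Ginv by blast
  have Gprod: "prod G {d. d dvd N \<and> moebius d = 1} = prod G {d. d dvd N \<and> moebius d = -1}"
    using invol(1)[OF p(1) pN N0, of G] Ginv by blast
  let ?U = "{d. d dvd N \<and> moebius d = 1}"
  let ?U' = "{d. d dvd N \<and> d > 1 \<and> moebius d = 1}"
  let ?V = "{d. d dvd N \<and> moebius d = -1}"
  have finU': "finite ?U'" using N0 by simp
  have Ueq: "?U = insert 1 ?U'" using N0 by (auto simp: moebius_one)
  have Uins: "1 \<notin> ?U'" by simp
  have PU': "prod b ?U' = prod G ?U'" using bG by (intro prod.cong) auto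
  have PV: "prod b ?V = prod G ?V"
  proof (intro prod.cong refl)
    fix d assume "d \<in> ?V"
    then have "d dvd N" "moebius d = -1" by auto
    moreover then have "d \<noteq> 0" "d \<noteq> 1" using N0 by (auto simp: moebius_one)
    ultimately show "b d = G d" using bG by simp
  qed
  have PU: "prod b ?U = b 1 * prod G ?U'"
    unfolding Ueq prod.insert[OF finU' Uins] PU' ..
  have GU: "prod G ?U = G 1 * prod G ?U'"
    unfolding Ueq prod.insert[OF finU' Uins] ..
  have h2: "prod b ?U = prod b ?V"
    using E1[OF assms(2) zN z1] by (simp add: ev_diff ev_prod ev_qsub b_def)
  have key: "b 1 * prod G ?U' = G 1 * prod G ?U'"
    using h2 PU PV Gprod GU by simp
  have S: "(\<Sum>d\<in>{d. d dvd N}. of_int (moebius d) * b d) = b 1 - G 1"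
    using split_sum[OF N0 bG] Gsum by simp
  have "ev ((\<Sum>d\<in>{d. d dvd N}. of_int (moebius d) * qsub (a (N div d)) d)
        * (\<Prod>d\<in>?U'. qsub (a (N div d)) d)) z
      = (\<Sum>d\<in>{d. d dvd N}. of_int (moebius d) * b d) * prod b ?U'"
    by (simp add: ev_mult ev_sum ev_prod ev_of_int ev_qsub b_def)
  also have "\<dots> = (b 1 - G 1) * prod G ?U'" using S PU' by simp
  also have "\<dots> = 0" using key by (simp add: algebra_simps)
  finally show "ev ((\<Sum>d\<in>{d. d dvd N}. of_int (moebius d) * qsub (a (N div d)) d)
        * (\<Prod>d\<in>?U'. qsub (a (N div d)) d)) z = 0" .
qed

end
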